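(* Let $X$ be a real normed space and $\mathcal M=\{M_1,\dots,M_n\}$ a finite family of nonempty closed bounded convex subsets of $X$, with $\Sigma(\mathcal M)\neq\emptyset$ and $d=(d_1,\dots,d_n)\in\Omega(\mathcal M)$. Then for every $K\in\Sigma_d(\mathcal M)$ there exists $i$ with $d_i=\sup_{x\in M_i}|x\,K|$.
   Context: For $p\in X$ and $A\subset X$: $|p\,A|=\inf_{a\in A}|p\,a|$ ($=\infty$ if $A=\emptyset$). For nonempty $A,B$, $d_H(A,B)=\max\{\sup_{a\in A}|a\,B|,\sup_{b\in B}|b\,A|\}\in[0,\infty]$. Let $\mathcal P^f_{\mathrm{Cl}}(X)$ be the set of all nonempty closed $Y\subset X$ with $d_H(Y,M_1)<\infty$ (the finiteness class of the $M_i$). $S_{\mathcal M}(Y)=\sum_i d_H(Y,M_i)$; $\Sigma(\mathcal M)$ is the set of minimizers of $S_{\mathcal M}$ over $\mathcal P^f_{\mathrm{Cl}}(X)$; for $K\in\Sigma(\mathcal M)$, $d(K)=(d_H(K,M_1),\dots,d_H(K,M_n))$; $\Omega(\mathcal M)=\{d(K):K\in\Sigma(\mathcal M)\}$; for $d\in\Omega(\mathcal M)$, $\Sigma_d(\mathcal M)=\{K\in\Sigma(\mathcal M):d(K)=d\}$. *)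

theory Defs
  imports "HOL-Analysis.Analysis"
begin

text \<open>Distance from a point to a set, valued in the extended reals (infinite for the empty set).\<close>
definition pt_set_dist :: "'a::metric_space \<Rightarrow> 'a set \<Rightarrow> ereal" where
  "pt_set_dist p A = (INF a\<in>A. ereal (dist p a))"

definition hdist :: "'a::metric_space set \<Rightarrow> 'a set \<Rightarrow> ereal" where
  "hdist A B = max (SUP a\<in>A. pt_set_dist a B) (SUP b\<in>B. pt_set_dist b A)"

text \<open>The family M_1..M_n is represented as M 0, ..., M (n-1).\<close>
definition PfCl :: "(nat \<Rightarrow> 'a::metric_space set) \<Rightarrow> 'a set set" where
  "PfCl M = {Y. Y \<noteq> {} \<and> closed Y \<and> hdist Y (M 0) < \<infinity>}"

definition S_M :: "(nat \<Rightarrow> 'a::metric_space set) \<Rightarrow> nat \<Rightarrow> 'a set \<Rightarrow> ereal" where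
  "S_M M n Y = (\<Sum>i<n. hdist Y (M i))"

definition Sigma_M :: "(nat \<Rightarrow> 'a::metric_space set) \<Rightarrow> nat \<Rightarrow> 'a set set" where
  "Sigma_M M n = {K \<in> PfCl M. \<forall>Y \<in> PfCl M. S_M M n K \<le> S_M M n Y}"

definition dvec :: "(nat \<Rightarrow> 'a::metric_space set) \<Rightarrow> nat \<Rightarrow> 'a set \<Rightarrow> ereal list" where
  "dvec M n K = map (\<lambda>i. hdist K (M i)) [0..<n]"

definition Omega_M :: "(nat \<Rightarrow> 'a::metric_space set) \<Rightarrow> nat \<Rightarrow> ereal list set" where
  "Omega_M M n = dvec M n ` Sigma_M M n"

definition Sigma_d :: "(nat \<Rightarrow> 'a::metric_space set) \<Rightarrow> nat \<Rightarrow> ereal list \<Rightarrow> 'a set set" where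
  "Sigma_d M n d = {K \<in> Sigma_M M n. dvec M n K = d}"

end

theory Submission
  imports Defs
begin

lemma infdist_lt:
  assumes "A \<noteq> {}" "infdist x A < e" shows "\<exists>a\<in>A. dist x a < e"
proof -
  have "bdd_below ((\<lambda>a. dist x a) ` A)" by (rule bdd_belowI[of _ 0]) auto
  then show ?thesis using assms by (simp add: infdist_notempty cINF_less_iff)
qed

lemma infdist_convex:
  fixes a b :: "'a::real_normed_vector"
  assumes "convex M" "M \<noteq> {}" "0 \<le> t" "t \<le> 1"
  shows "infdist ((1-t) *\<^sub>R a + t *\<^sub>R b) M \<le> (1-t) * infdist a M + t * infdist b M"
proof (rule field_le_epsilon)
  fix e :: real assume e: "e > 0"
  obtain m1 where m1: "m1 \<in> M" "dist a m1 < infdist a M + e"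
    using infdist_lt[OF assms(2), of a "infdist a M + e"] e by auto
  obtain m2 where m2: "m2 \<in> M" "dist b m2 < infdist b M + e"
    using infdist_lt[OF assms(2), of b "infdist b M + e"] e by auto
  have mem: "(1-t) *\<^sub>R m1 + t *\<^sub>R m2 \<in> M"
    using assms m1 m2 by (intro convexD) auto
  have "dist ((1-t) *\<^sub>R a + t *\<^sub>R b) ((1-t) *\<^sub>R m1 + t *\<^sub>R m2)
        = norm ((1-t) *\<^sub>R (a - m1) + t *\<^sub>R (b - m2))"
    by (simp add: dist_norm algebra_simps)
  also have "\<dots> \<le> norm ((1-t) *\<^sub>R (a - m1)) + norm (t *\<^sub>R (b - m2))"
    by (rule norm_triangle_ineq)
  also have "\<dots> = (1-t) * dist a m1 + t * dist b m2"
    using assms by (simp add: dist_norm)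
  also have "\<dots> \<le> (1-t) * (infdist a M + e) + t * (infdist b M + e)"
    using assms m1 m2 by (intro add_mono mult_left_mono) auto
  also have "\<dots> = (1-t) * infdist a M + t * infdist b M + e"
    by (simp add: algebra_simps)
  finally show "infdist ((1-t) *\<^sub>R a + t *\<^sub>R b) M \<le> (1-t) * infdist a M + t * infdist b M + e"
    using infdist_le2[OF mem] by blast
qed

lemma infdist_convex_on:
  fixes M :: "'a::real_normed_vector set"
  assumes "convex M" "M \<noteq> {}"
  shows "convex_on UNIV (\<lambda>x. infdist x M)"
  using infdist_convex[OF assms] by (intro convex_onI) auto

lemma pt_set_dist_eq:
  assumes "A \<noteq> {}" shows "pt_set_dist x A = ereal (infdist x A)"
proof -
  have "bdd_below ((\<lambda>a. dist x a) ` A)" by (rule bdd_belowI[of _ 0]) auto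
  then have "ereal (Inf ((\<lambda>a. dist x a) ` A)) = (INF a\<in>(\<lambda>a. dist x a) ` A. ereal a)"
    using assms by (intro ereal_Inf') auto
  then show ?thesis using assms
    by (simp add: pt_set_dist_def infdist_notempty image_comp o_def)
qed

lemma hdist_le:
  assumes "A \<noteq> {}" "B \<noteq> {}" "\<forall>a\<in>A. infdist a B \<le> c" "\<forall>b\<in>B. infdist b A \<le> c"
  shows "hdist A B \<le> ereal c"
  using assms unfolding hdist_def
  by (auto simp: pt_set_dist_eq intro!: SUP_least)

lemma bounded_infdist:
  fixes A B :: "'a::real_normed_vector set"
  assumes "bounded A" "bounded B" "B \<noteq> {}"
  shows "\<exists>C. \<forall>a\<in>A. infdist a B \<le> C"
proof -
  obtain b where b: "b \<in> B" using assms by auto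
  obtain C where C: "\<forall>a\<in>A. norm a \<le> C" using assms(1) bounded_iff by blast
  have "infdist a B \<le> C + norm b" if "a \<in> A" for a
  proof -
    have "infdist a B \<le> dist a b" by (rule infdist_le[OF b])
    also have "\<dots> \<le> norm a + norm b" by (simp add: dist_norm norm_triangle_ineq4)
    finally show ?thesis using C that by force
  qed
  then show ?thesis by blast
qed

lemma sum_lt_inf:
  fixes f :: "'b \<Rightarrow> ereal"
  assumes "finite A" "\<forall>i\<in>A. f i < \<infinity>" shows "sum f A < \<infinity>"
  using assms by (induction A rule: finite_induct) auto

theorem mainTheorem18:
  fixes M :: "nat \<Rightarrow> 'a::real_normed_vector set" and n :: nat
    and d :: "ereal list" and K :: "'a set"
  assumes "n \<ge> 1"
    and "\<forall>i<n. M i \<noteq> {} \<and> closed (M i) \<and> bounded (M i) \<and> convex (M i)"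
    and "Sigma_M M n \<noteq> {}"
    and "d \<in> Omega_M M n"
    and "K \<in> Sigma_d M n d"
  shows "\<exists>i<n. d ! i = (SUP x\<in>M i. pt_set_dist x K)"
proof (rule ccontr)
  assume neg: "\<not> ?thesis"
  from assms(5) have KS: "K \<in> Sigma_M M n" and dK: "dvec M n K = d"
    by (auto simp: Sigma_d_def)
  from KS have Kp: "K \<in> PfCl M" and Kmin: "\<forall>Y\<in>PfCl M. S_M M n K \<le> S_M M n Y"
    by (auto simp: Sigma_M_def)
  from Kp have Kne: "K \<noteq> {}" and Kcl: "closed K" by (auto simp: PfCl_def)
  have Mi: "M i \<noteq> {}" "closed (M i)" "bounded (M i)" "convex (M i)" if "i < n" for i
    using assms(2) that by auto
  have n0: "0 < n" using assms(1) by auto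
  have dnth: "d ! i = hdist K (M i)" if "i < n" for i
    using dK that by (auto simp: dvec_def)
  have M0P: "M 0 \<in> PfCl M"
  proof -
    have "hdist (M 0) (M 0) \<le> ereal 0"
      using Mi[OF n0] by (intro hdist_le) auto
    then show ?thesis using Mi[OF n0] by (auto simp: PfCl_def)
  qed
  have fin0: "hdist (M 0) (M i) < \<infinity>" if ii: "i < n" for i
  proof -
    obtain C1 where C1: "\<forall>a\<in>M 0. infdist a (M i) \<le> C1"
      using bounded_infdist[of "M 0" "M i"] Mi[OF n0] Mi[OF ii] by blast
    obtain C2 where C2: "\<forall>a\<in>M i. infdist a (M 0) \<le> C2"
      using bounded_infdist[of "M i" "M 0"] Mi[OF n0] Mi[OF ii] by blast
    have "hdist (M 0) (M i) \<le> ereal (max C1 C2)"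
      using Mi[OF n0] Mi[OF ii] C1 C2 by (intro hdist_le) force+
    also have "\<dots> < \<infinity>" by (simp add: max_def)
    finally show ?thesis .
  qed
  have SM0: "S_M M n (M 0) < \<infinity>"
    unfolding S_M_def by (rule sum_lt_inf) (use fin0 in auto)
  have SK: "S_M M n K < \<infinity>" using Kmin M0P SM0 by (meson le_less_trans)
  have hnn: "0 \<le> hdist K (M i)" for i
  proof -
    obtain k where k: "k \<in> K" using Kne by auto
    have "0 \<le> pt_set_dist k (M i)"
      unfolding pt_set_dist_def by (auto intro: INF_greatest)
    also have "\<dots> \<le> (SUP a\<in>K. pt_set_dist a (M i))" using k by (rule SUP_upper)
    finally show ?thesis unfolding hdist_def by (simp add: le_max_iff_disj)
  qed
  have hfin: "hdist K (M i) < \<infinity>" if "i < n" for i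
  proof -
    have "S_M M n K = hdist K (M i) + (\<Sum>j\<in>{..<n} - {i}. hdist K (M j))"
      unfolding S_M_def using that by (simp add: sum.remove)
    moreover have "0 \<le> (\<Sum>j\<in>{..<n} - {i}. hdist K (M j))" by (intro sum_nonneg hnn)
    ultimately have "hdist K (M i) \<le> S_M M n K" by (simp add: add_increasing2)
    then show ?thesis using SK by (meson le_less_trans)
  qed
  define A where "A i = (SUP k\<in>K. pt_set_dist k (M i))" for i
  define B where "B i = (SUP x\<in>M i. pt_set_dist x K)" for i
  have hAB: "hdist K (M i) = max (A i) (B i)" for i
    unfolding A_def B_def hdist_def by simp
  have BA: "B i < A i" "hdist K (M i) = A i" if "i < n" for i
    using neg dnth[OF that] hAB[of i] that unfolding B_def[symmetric]
    by (auto simp: max_def split: if_splits)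
  define D where "D i = real_of_ereal (hdist K (M i))" for i
  have eD: "hdist K (M i) = ereal (D i)" if "i < n" for i
    using hnn[of i] hfin[OF that] unfolding D_def by (cases "hdist K (M i)") auto
  have Bnn: "0 \<le> B i" if "i < n" for i
  proof -
    obtain x where x: "x \<in> M i" using Mi[OF \<open>i < n\<close>] by auto
    have "0 \<le> pt_set_dist x K"
      unfolding pt_set_dist_def by (auto intro: INF_greatest)
    also have "\<dots> \<le> B i" unfolding B_def using x by (rule SUP_upper)
    finally show ?thesis .
  qed
  define R where "R i = real_of_ereal (B i)" for i
  have eR: "B i = ereal (R i)" "R i < D i" if "i < n" for i
  proof -
    have "B i < ereal (D i)" using BA[OF that] eD[OF that] by simp
    then show "B i = ereal (R i)" using Bnn[OF that] unfolding R_def by (cases "B i") auto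
    then show "R i < D i" using \<open>B i < ereal (D i)\<close> by simp
  qed
  have F1: "infdist k (M i) \<le> D i" if "i < n" "k \<in> K" for i k
  proof -
    have "ereal (infdist k (M i)) = pt_set_dist k (M i)" using pt_set_dist_eq Mi[OF that(1)] by metis
    also have "\<dots> \<le> A i" unfolding A_def using that(2) by (rule SUP_upper)
    also have "\<dots> = ereal (D i)" using BA[OF that(1)] eD[OF that(1)] by simp
    finally show ?thesis by simp
  qed
  have F2: "infdist x K \<le> R i" if "i < n" "x \<in> M i" for i x
  proof -
    have "ereal (infdist x K) = pt_set_dist x K" using pt_set_dist_eq Kne by metis
    also have "\<dots> \<le> B i" unfolding B_def using that(2) by (rule SUP_upper)
    also have "\<dots> = ereal (R i)" using eR[OF that(1)] by simp
    finally show ?thesis by simp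
  qed
  have "\<exists>k\<in>K. infdist k (M i) < D i" if "i < n" for i
  proof -
    obtain x where x: "x \<in> M i" using Mi[OF \<open>i < n\<close>] by auto
    have "infdist x K < D i" using F2[OF that x] eR(2)[OF that] by simp
    then obtain k where k: "k \<in> K" "dist x k < D i" using infdist_lt Kne by blast
    have "infdist k (M i) \<le> dist k x" by (rule infdist_le[OF x])
    then show ?thesis using k by (auto simp: dist_commute intro!: bexI[of _ k])
  qed
  then obtain kk where kk: "\<And>i. i < n \<Longrightarrow> kk i \<in> K \<and> infdist (kk i) (M i) < D i"
    by metis
  define \<eta> where "\<eta> = Min ((\<lambda>i. D i - infdist (kk i) (M i)) ` {..<n})"
  define g where "g = Min ((\<lambda>i. D i - R i) ` {..<n})"
  have \<eta>pos: "\<eta> > 0" unfolding \<eta>_def using n0 kk by (subst Min_gr_iff) auto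
  have gpos: "g > 0" unfolding g_def using n0 eR(2) by (subst Min_gr_iff) auto
  have \<eta>le: "\<eta> \<le> D i - infdist (kk i) (M i)" if "i < n" for i
    unfolding \<eta>_def using that by (intro Min_le) auto
  have gle: "g \<le> D i - R i" if "i < n" for i
    unfolding g_def using that by (intro Min_le) auto
  obtain C0 where C0: "\<forall>m\<in>M 0. norm m \<le> C0" using Mi(3)[OF n0] bounded_iff by blast
  define Bd where "Bd = \<bar>C0\<bar> + \<bar>D 0\<bar> + 1"
  have Bdpos: "Bd > 0" unfolding Bd_def by simp
  have Kbd: "norm k \<le> Bd" if "k \<in> K" for k
  proof -
    have "infdist k (M 0) < D 0 + 1" using F1[OF n0 that] by simp
    then obtain m where m: "m \<in> M 0" "dist k m < D 0 + 1" using infdist_lt Mi(1)[OF n0] by blast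
    have "norm k \<le> norm m + dist k m" by (simp add: dist_norm norm_triangle_sub)
    then show ?thesis using m C0 unfolding Bd_def by force
  qed
  define c where "c = (\<Sum>i<n. (1 / real n) *\<^sub>R kk i)"
  have cbd: "norm c \<le> Bd"
  proof -
    have "norm c \<le> (\<Sum>i<n. norm ((1 / real n) *\<^sub>R kk i))" unfolding c_def by (rule norm_sum)
    also have "\<dots> \<le> (\<Sum>i<n. (1 / real n) * Bd)"
      using kk Kbd by (intro sum_mono) (auto intro!: divide_right_mono)
    also have "\<dots> = Bd" using n0 by simp
    finally show ?thesis .
  qed
  have cest: "infdist c (M j) \<le> D j - \<eta> / real n" if j: "j < n" for j
  proof -
    have "infdist c (M j) \<le> (\<Sum>i<n. (1 / real n) * infdist (kk i) (M j))"
      unfolding c_def using n0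
      by (intro convex_on_sum[OF _ _ infdist_convex_on[OF Mi(4)[OF j] Mi(1)[OF j]]]) auto
    also have "\<dots> = (1 / real n) * (\<Sum>i<n. infdist (kk i) (M j))" by (simp add: sum_distrib_left)
    also have "(\<Sum>i<n. infdist (kk i) (M j)) = infdist (kk j) (M j) + (\<Sum>i\<in>{..<n}-{j}. infdist (kk i) (M j))"
      using j by (simp add: sum.remove)
    also have "\<dots> \<le> (D j - \<eta>) + (\<Sum>i\<in>{..<n}-{j}. D j)"
      using \<eta>le[OF j] F1[OF j] kk by (intro add_mono sum_mono) force+
    also have "(\<Sum>i\<in>{..<n}-{j}. D j) = (real n - 1) * D j" using j by simp
    finally have "infdist c (M j) \<le> (1 / real n) * ((D j - \<eta>) + (real n - 1) * D j)"
      using n0 by (simp add: divide_right_mono)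
    also have "\<dots> = D j - \<eta> / real n" using n0 by (simp add: field_simps)
    finally show ?thesis .
  qed
  define t where "t = min (1/2) (g / (4 * Bd + 1))"
  have tpos: "t > 0" unfolding t_def using gpos Bdpos by auto
  have tle: "t \<le> 1/2" unfolding t_def by linarith
  have t2: "t * (2 * Bd) \<le> g / 2"
  proof -
    have "t \<le> g / (4 * Bd + 1)" unfolding t_def by simp
    then have "t * (4 * Bd + 1) \<le> g" using Bdpos by (simp add: field_simps)
    then show ?thesis using tpos Bdpos by (simp add: algebra_simps)
  qed
  define h where "h z = (1 - t) *\<^sub>R z + t *\<^sub>R c" for z
  define Y where "Y = h ` K"
  define s where "s = min (t * \<eta> / real n) (g / 2)"
  have spos: "s > 0" unfolding s_def using tpos \<eta>pos gpos n0 by auto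
  have Yest1: "infdist y (M j) \<le> D j - s" if j: "j < n" and y: "y \<in> Y" for j y
  proof -
    obtain k where k: "k \<in> K" "y = h k" using y unfolding Y_def by auto
    have "infdist y (M j) \<le> (1 - t) * infdist k (M j) + t * infdist c (M j)"
      unfolding k h_def using tpos tle by (intro infdist_convex Mi[OF j]) auto
    also have "\<dots> \<le> (1 - t) * D j + t * (D j - \<eta> / real n)"
      using tpos tle F1[OF j k(1)] cest[OF j] by (intro add_mono mult_left_mono) auto
    also have "\<dots> = D j - t * \<eta> / real n" by (simp add: algebra_simps)
    also have "\<dots> \<le> D j - s" unfolding s_def by simp
    finally show ?thesis .
  qed
  have Yest2: "infdist x Y \<le> D j - s" if j: "j < n" and x: "x \<in> M j" for j x
  proof -
    have "infdist x Y - t * (2 * Bd) \<le> dist x k" if k: "k \<in> K" for k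
    proof -
      have "h k \<in> Y" unfolding Y_def using k by auto
      then have "infdist x Y \<le> dist x (h k)" by (rule infdist_le)
      also have "\<dots> \<le> dist x k + dist k (h k)" by (rule dist_triangle)
      also have "dist k (h k) = t * norm (k - c)"
        unfolding h_def dist_norm using tpos
        by (simp add: algebra_simps flip: scaleR_diff_right)
      also have "norm (k - c) \<le> 2 * Bd"
        using norm_triangle_ineq4[of k c] Kbd[OF k] cbd by linarith
      finally show ?thesis using tpos by (smt (verit) mult_left_mono)
    qed
    then have "infdist x Y - t * (2 * Bd) \<le> infdist x K"
      unfolding infdist_notempty[OF Kne] using Kne by (intro cINF_greatest) auto
    then have "infdist x Y \<le> R j + g / 2" using F2[OF j x] t2 by linarith
    also have "\<dots> \<le> D j - s" using gle[OF j] unfolding s_def by linarith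
    finally show ?thesis .
  qed
  have Yne: "Y \<noteq> {}" unfolding Y_def using Kne by auto
  have hY: "hdist Y (M j) \<le> ereal (D j - s)" if j: "j < n" for j
    using Yne Mi(1)[OF j] Yest1[OF j] Yest2[OF j] by (intro hdist_le) auto
  have t1: "1 - t \<noteq> 0" using tle by simp
  have Yeq: "Y = (\<lambda>z. (1 / (1 - t)) *\<^sub>R (z - t *\<^sub>R c)) -` K"
  proof (rule set_eqI, rule iffI)
    fix z assume "z \<in> Y"
    then obtain k where "k \<in> K" "z = h k" unfolding Y_def by auto
    then show "z \<in> (\<lambda>z. (1 / (1 - t)) *\<^sub>R (z - t *\<^sub>R c)) -` K" using t1 by (simp add: h_def)
  next
    fix z assume "z \<in> (\<lambda>z. (1 / (1 - t)) *\<^sub>R (z - t *\<^sub>R c)) -` K"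
    then have z: "(1 / (1 - t)) *\<^sub>R (z - t *\<^sub>R c) \<in> K" by simp
    have "z = h ((1 / (1 - t)) *\<^sub>R (z - t *\<^sub>R c))" using t1 by (simp add: h_def)
    then show "z \<in> Y" unfolding Y_def using z by blast
  qed
  have Ycl: "closed Y" unfolding Yeq
    by (intro continuous_closed_vimage Kcl) (intro continuous_intros)
  have YP: "Y \<in> PfCl M"
    using Yne Ycl hY[OF n0] unfolding PfCl_def by (auto intro: le_less_trans)
  have "S_M M n Y \<le> (\<Sum>j<n. ereal (D j - s))" unfolding S_M_def by (intro sum_mono hY) auto
  also have "\<dots> = ereal (\<Sum>j<n. D j - s)" by simp
  also have "\<dots> < ereal (\<Sum>j<n. D j)" using n0 spos by (simp add: sum_subtractf)
  also have "\<dots> = S_M M n K" unfolding S_M_def using eD by simp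
  finally show False using Kmin YP by (meson not_le)
qed

end
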